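(* Let $L$ be a finite distributive lattice and $K=[\hat0_K,\hat1_K]$ a cutting of $L$. Then $$R(L\boxplus K,x)=\begin{cases}R(L,x)+x^{h_L(\hat0_K)+1}R(K,x), & \text{if }\hat1_K=\hat1_L;\\ R(K,x)+x\,R(L,x), &\text{if }\hat0_K=\hat0_L.\end{cases}$$
   Context: For a finite poset $P$, $\mathcal{F}(P)$ is the set of filters (up-sets) of $P$ ordered by reverse inclusion; every finite distributive lattice $L$ is isomorphic to some $\mathcal{F}(P)$; $\hat0_L,\hat1_L$ denote the least and greatest elements of $L$. A cutting of $L$ is an interval $K=[\hat0_K,\hat1_K]$ of $L$ such that every maximal chain of $L$ meets $K$. For a cutting $K$ of $L=\mathcal{F}(P)$, let $S=\hat0_K\setminus\hat1_K$, $S_0$ the set of maximal elements of $P\setminus\hat0_K$, $S_1$ the set of minimal elements of $\hat1_K$. The poset $P_K$ is $P\cup\{x_K\}$ ($x_K$ new) where the order on $P$ is unchanged, $z<x_K$ iff $z\le s$ for some $s\in S_0$, $x_K<y$ iff $y\ge s$ for some $s\in S_1$, and $x_K$ is incomparable to every element of $S$. The convex expansion is $L\boxplus K:=\mathcal{F}(P_K)$. For a finite distributive lattice $M$ and $a\in M$, $h_M(a)$ is the height of $a$ in $M$, and $R(M,x)=\sum_{a\in M}x^{h_M(a)}$ is the rank generating function. *)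

theory Defs
  imports "HOL-Computational_Algebra.Polynomial"
begin

definition chain_on :: "'b set \<Rightarrow> ('b \<Rightarrow> 'b \<Rightarrow> bool) \<Rightarrow> 'b set \<Rightarrow> bool" where
  "chain_on M le C \<longleftrightarrow> C \<subseteq> M \<and> (\<forall>u\<in>C. \<forall>v\<in>C. le u v \<or> le v u)"

definition maximal_chain :: "'b set \<Rightarrow> ('b \<Rightarrow> 'b \<Rightarrow> bool) \<Rightarrow> 'b set \<Rightarrow> bool" where
  "maximal_chain M le C \<longleftrightarrow> chain_on M le C \<and> (\<forall>D. chain_on M le D \<and> C \<subseteq> D \<longrightarrow> D = C)"

definition height :: "'b set \<Rightarrow> ('b \<Rightarrow> 'b \<Rightarrow> bool) \<Rightarrow> 'b \<Rightarrow> nat" where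
  "height M le a = Max ((\<lambda>C. card C - 1) ` {C. chain_on {b \<in> M. le b a} le C})"

definition rank_gen :: "'b set \<Rightarrow> ('b \<Rightarrow> 'b \<Rightarrow> bool) \<Rightarrow> int poly" where
  "rank_gen M le = (\<Sum>a\<in>M. monom 1 (height M le a))"

definition finite_poset :: "'a set \<Rightarrow> ('a \<Rightarrow> 'a \<Rightarrow> bool) \<Rightarrow> bool" where
  "finite_poset P le \<longleftrightarrow> finite P \<and> (\<forall>x\<in>P. le x x)
     \<and> (\<forall>x\<in>P. \<forall>y\<in>P. le x y \<and> le y x \<longrightarrow> x = y)
     \<and> (\<forall>x\<in>P. \<forall>y\<in>P. \<forall>z\<in>P. le x y \<and> le y z \<longrightarrow> le x z)"

definition filters :: "'a set \<Rightarrow> ('a \<Rightarrow> 'a \<Rightarrow> bool) \<Rightarrow> 'a set set" where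
  "filters P le = {F. F \<subseteq> P \<and> (\<forall>x\<in>F. \<forall>y\<in>P. le x y \<longrightarrow> y \<in> F)}"

(* F(P) is ordered by reverse inclusion *)
definition rev_incl :: "'a set \<Rightarrow> 'a set \<Rightarrow> bool" where
  "rev_incl A B \<longleftrightarrow> B \<subseteq> A"

definition interval :: "'a set \<Rightarrow> ('a \<Rightarrow> 'a \<Rightarrow> bool) \<Rightarrow> 'a set \<Rightarrow> 'a set \<Rightarrow> 'a set set" where
  "interval P le a b = {c \<in> filters P le. rev_incl a c \<and> rev_incl c b}"

definition is_cutting :: "'a set \<Rightarrow> ('a \<Rightarrow> 'a \<Rightarrow> bool) \<Rightarrow> 'a set \<Rightarrow> 'a set \<Rightarrow> bool" where
  "is_cutting P le a b \<longleftrightarrow> a \<in> filters P le \<and> b \<in> filters P le \<and> rev_incl a b \<and>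
     (\<forall>C. maximal_chain (filters P le) rev_incl C \<longrightarrow> C \<inter> interval P le a b \<noteq> {})"

definition S0 :: "'a set \<Rightarrow> ('a \<Rightarrow> 'a \<Rightarrow> bool) \<Rightarrow> 'a set \<Rightarrow> 'a set" where
  "S0 P le a = {s \<in> P - a. \<forall>t\<in>P - a. le s t \<longrightarrow> t = s}"

definition S1 :: "'a set \<Rightarrow> ('a \<Rightarrow> 'a \<Rightarrow> bool) \<Rightarrow> 'a set \<Rightarrow> 'a set" where
  "S1 P le b = {s \<in> b. \<forall>t\<in>b. le t s \<longrightarrow> t = s}"

(* P_K: carrier Some ` P plus new element None = x_K *)
definition PK :: "'a set \<Rightarrow> 'a option set" where
  "PK P = insert None (Some ` P)"

definition leK :: "'a set \<Rightarrow> ('a \<Rightarrow> 'a \<Rightarrow> bool) \<Rightarrow> 'a set \<Rightarrow> 'a set \<Rightarrow> 'a option \<Rightarrow> 'a option \<Rightarrow> bool" where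
  "leK P le a b u v = (case (u, v) of
      (Some z, Some y) \<Rightarrow> le z y
    | (Some z, None) \<Rightarrow> z \<notin> a - b \<and> (\<exists>s\<in>S0 P le a. le z s)
    | (None, Some y) \<Rightarrow> y \<notin> a - b \<and> (\<exists>s\<in>S1 P le b. le s y)
    | (None, None) \<Rightarrow> True)"

(* convex expansion L \<boxplus> K = F(P_K), ordered by reverse inclusion *)
definition convex_expansion :: "'a set \<Rightarrow> ('a \<Rightarrow> 'a \<Rightarrow> bool) \<Rightarrow> 'a set \<Rightarrow> 'a set \<Rightarrow> 'a option set set" where
  "convex_expansion P le a b = filters (PK P) (leK P le a b)"

end

theory Submission
  imports Defs
begin

lemma height_filters:
  fixes Q :: "'b set" and R :: "'b \<Rightarrow> 'b \<Rightarrow> bool" and f :: "'b \<Rightarrow> nat"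
  assumes fin: "finite Q"
    and fR: "\<And>x y. x \<in> Q \<Longrightarrow> y \<in> Q \<Longrightarrow> R x y \<Longrightarrow> x \<noteq> y \<Longrightarrow> f x < f y"
    and A: "A \<in> filters Q R" and G: "G \<in> filters Q R" and BG: "B \<subseteq> G" and GA: "G \<subseteq> A"
  shows "height {c \<in> filters Q R. B \<subseteq> c \<and> c \<subseteq> A} rev_incl G = card (A - G)"
proof -
  define M where "M = {c \<in> filters Q R. B \<subseteq> c \<and> c \<subseteq> A}"
  have AQ: "A \<subseteq> Q" using A by (auto simp: filters_def)
  have finA: "finite A" using AQ fin finite_subset by blast
  have MQ: "M \<subseteq> Pow Q" by (auto simp: M_def filters_def)
  have finM: "finite M" using MQ fin by (meson finite_Pow_iff finite_subset)
  define S where "S = {c \<in> M. rev_incl c G}"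
  have S_eq: "S = {c \<in> M. G \<subseteq> c}" by (auto simp: S_def rev_incl_def)
  have finS: "finite S" using finM by (simp add: S_def)
  have upper: "card C \<le> card (A - G) + 1" if C: "chain_on S rev_incl C" for C
  proof -
    have CS: "C \<subseteq> S" and cmp: "\<forall>u\<in>C. \<forall>v\<in>C. v \<subseteq> u \<or> u \<subseteq> v"
      using C by (auto simp: chain_on_def rev_incl_def)
    have inj: "inj_on (\<lambda>c. card (c - G)) C"
    proof (rule inj_onI)
      fix u v assume u: "u \<in> C" and v: "v \<in> C" and e: "card (u - G) = card (v - G)"
      have uA: "u \<subseteq> A" "G \<subseteq> u" using u CS by (auto simp: S_eq M_def)
      have vA: "v \<subseteq> A" "G \<subseteq> v" using v CS by (auto simp: S_eq M_def)
      have fu: "finite (u - G)" "finite (v - G)" using uA vA finA finite_subset by blast+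
      from cmp u v have "v \<subseteq> u \<or> u \<subseteq> v" by blast
      then show "u = v"
      proof
        assume "v \<subseteq> u"
        then have "v - G \<subseteq> u - G" by blast
        then have "v - G = u - G" using card_subset_eq fu e by metis
        then show "u = v" using uA vA by blast
      next
        assume "u \<subseteq> v"
        then have "u - G \<subseteq> v - G" by blast
        then have "u - G = v - G" using card_subset_eq fu e by metis
        then show "u = v" using uA vA by blast
      qed
    qed
    have img: "(\<lambda>c. card (c - G)) ` C \<subseteq> {0..card (A - G)}"
    proof
      fix n assume "n \<in> (\<lambda>c. card (c - G)) ` C"
      then obtain c where c: "c \<in> C" "n = card (c - G)" by blast
      have "c \<subseteq> A" using c CS by (auto simp: S_eq M_def)
      then have "card (c - G) \<le> card (A - G)" using finA by (intro card_mono) auto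
      then show "n \<in> {0..card (A - G)}" using c by simp
    qed
    have "card C \<le> card {0..card (A - G)}" by (rule card_inj_on_le[OF inj img]) simp
    then show ?thesis by simp
  qed
  have ex: "\<forall>c. c \<in> M \<longrightarrow> G \<subseteq> c \<longrightarrow> card (A - c) = n \<longrightarrow>
      (\<exists>C. chain_on {d \<in> M. c \<subseteq> d} rev_incl C \<and> card C = n + 1)" for n
  proof (induction n)
    case 0
    show ?case
    proof (intro allI impI)
      fix c assume c: "c \<in> M" "G \<subseteq> c" "card (A - c) = 0"
      have "c \<subseteq> A" using c by (auto simp: M_def)
      then have "c = A" using c finA by auto
      then show "\<exists>C. chain_on {d \<in> M. c \<subseteq> d} rev_incl C \<and> card C = 0 + 1"
        using c by (intro exI[of _ "{c}"]) (auto simp: chain_on_def rev_incl_def)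
    qed
  next
    case (Suc n)
    show ?case
    proof (intro allI impI)
      fix c assume c: "c \<in> M" "G \<subseteq> c" "card (A - c) = Suc n"
      define D where "D = A - c"
      have finD: "finite D" using finA by (simp add: D_def)
      have neD: "D \<noteq> {}" using c(3) unfolding D_def by (metis card.empty nat.simps(3))
      obtain x where x: "x \<in> D" "f x = Max (f ` D)"
        using Max_in[of "f ` D"] finD neD by (metis (mono_tags, lifting) empty_is_image finite_imageI imageE)
      have xmax: "\<And>y. y \<in> D \<Longrightarrow> f y \<le> f x" using x finD by simp
      have cfil: "c \<in> filters Q R" "B \<subseteq> c" "c \<subseteq> A" using c by (auto simp: M_def)
      have xA: "x \<in> A" "x \<notin> c" using x by (auto simp: D_def)
      have ins: "insert x c \<in> M"
        unfolding M_def filters_def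
      proof (intro CollectI conjI ballI impI)
        show "insert x c \<subseteq> Q" using xA AQ cfil by (auto simp: filters_def)
        show "B \<subseteq> insert x c" "insert x c \<subseteq> A" using cfil xA by auto
        fix u y assume u: "u \<in> insert x c" and y: "y \<in> Q" and r: "R u y"
        show "y \<in> insert x c"
        proof (cases "u = x")
          case True
          show ?thesis
          proof (rule ccontr)
            assume ny: "y \<notin> insert x c"
            have "y \<in> A" using A r True xA y by (auto simp: filters_def)
            then have "y \<in> D" using ny by (auto simp: D_def)
            then have "f y \<le> f x" by (rule xmax)
            moreover have "f x < f y" using fR[of x y] xA AQ y r True ny by auto
            ultimately show False by simp
          qed
        next
          case False
          then have "u \<in> c" using u by auto
          then show ?thesis using cfil r y by (auto simp: filters_def)
        qed
      qed
      have cardn: "card (A - insert x c) = n"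
      proof -
        have "A - insert x c = D - {x}" by (auto simp: D_def)
        then show ?thesis using x finD c by (simp add: D_def)
      qed
      obtain C' where C': "chain_on {d \<in> M. insert x c \<subseteq> d} rev_incl C'" "card C' = n + 1"
        using Suc.IH ins c cardn by blast
      have finC': "finite C'" using C'(2) card.infinite by fastforce
      have cnot: "c \<notin> C'" using C' xA by (auto simp: chain_on_def)
      show "\<exists>C. chain_on {d \<in> M. c \<subseteq> d} rev_incl C \<and> card C = Suc n + 1"
      proof (intro exI[of _ "insert c C'"] conjI)
        show "chain_on {d \<in> M. c \<subseteq> d} rev_incl (insert c C')"
          using C'(1) c(1) by (auto simp: chain_on_def rev_incl_def)
        show "card (insert c C') = Suc n + 1" using finC' cnot C'(2) by simp
      qed
    qed
  qed
  have GM: "G \<in> M" using G BG GA by (simp add: M_def)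
  obtain C0 where C0: "chain_on S rev_incl C0" "card C0 = card (A - G) + 1"
    using ex[of "card (A - G)"] GM S_eq by auto
  have finCh: "finite {C. chain_on S rev_incl C}"
  proof (rule finite_subset[of _ "Pow S"])
    show "{C. chain_on S rev_incl C} \<subseteq> Pow S" by (auto simp: chain_on_def)
  qed (simp add: finS)
  have "Max ((\<lambda>C. card C - 1) ` {C. chain_on S rev_incl C}) = card (A - G)"
  proof (rule Max_eqI)
    show "finite ((\<lambda>C. card C - 1) ` {C. chain_on S rev_incl C})" using finCh by simp
    show "\<And>y. y \<in> (\<lambda>C. card C - 1) ` {C. chain_on S rev_incl C} \<Longrightarrow> y \<le> card (A - G)"
      using upper by fastforce
    show "card (A - G) \<in> (\<lambda>C. card C - 1) ` {C. chain_on S rev_incl C}"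
      using C0 by (intro image_eqI[of _ _ C0]) auto
  qed
  then show ?thesis by (simp add: height_def S_def M_def)
qed


definition dcard :: "'a set \<Rightarrow> ('a \<Rightarrow> 'a \<Rightarrow> bool) \<Rightarrow> 'a \<Rightarrow> nat" where
  "dcard P le z = card {w \<in> P. le w z}"

lemma dcard_less:
  assumes "finite_poset P le" "x \<in> P" "y \<in> P" "le x y" "x \<noteq> y"
  shows "dcard P le x < dcard P le y"
proof -
  have fin: "finite P" using assms(1) by (simp add: finite_poset_def)
  have "{w \<in> P. le w x} \<subset> {w \<in> P. le w y}"
  proof
    show "{w \<in> P. le w x} \<subseteq> {w \<in> P. le w y}"
      using assms unfolding finite_poset_def by blast
    have "y \<notin> {w \<in> P. le w x}" using assms unfolding finite_poset_def by blast
    moreover have "y \<in> {w \<in> P. le w y}" using assms unfolding finite_poset_def by blast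
    ultimately show "{w \<in> P. le w x} \<noteq> {w \<in> P. le w y}" by blast
  qed
  then show ?thesis unfolding dcard_def by (rule psubset_card_mono[rotated]) (simp add: fin)
qed

lemma dcard_le: "finite P \<Longrightarrow> dcard P le x \<le> card P"
  unfolding dcard_def by (rule card_mono) auto

lemma ex_maximal:
  assumes po: "finite_poset P le" and X: "X \<subseteq> P" and z: "z \<in> X"
  shows "\<exists>s\<in>X. le z s \<and> (\<forall>t\<in>X. le s t \<longrightarrow> t = s)"
proof -
  have fin: "finite P" using po by (simp add: finite_poset_def)
  define D where "D = {s \<in> X. le z s}"
  have finD: "finite D" using fin X by (auto simp: D_def intro: finite_subset)
  have zD: "z \<in> D" using po z X by (auto simp: D_def finite_poset_def)
  obtain s where s: "s \<in> D" "dcard P le s = Max (dcard P le ` D)"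
    using Max_in[of "dcard P le ` D"] finD zD by (metis (mono_tags, lifting) empty_iff finite_imageI imageE image_eqI)
  have smax: "\<And>t. t \<in> D \<Longrightarrow> dcard P le t \<le> dcard P le s" using s finD by simp
  show ?thesis
  proof (intro bexI[of _ s] conjI ballI impI)
    show "s \<in> X" "le z s" using s by (auto simp: D_def)
    fix t assume t: "t \<in> X" "le s t"
    have "le z t" using po t s X z unfolding finite_poset_def D_def by blast
    then have "t \<in> D" using t by (simp add: D_def)
    then have "dcard P le t \<le> dcard P le s" by (rule smax)
    then show "t = s" using dcard_less[OF po, of s t] t s X by (force simp: D_def)
  qed
qed

lemma ex_minimal:
  assumes po: "finite_poset P le" and X: "X \<subseteq> P" and z: "z \<in> X"
  shows "\<exists>s\<in>X. le s z \<and> (\<forall>t\<in>X. le t s \<longrightarrow> t = s)"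
proof -
  have "finite_poset P (\<lambda>x y. le y x)" using po unfolding finite_poset_def by blast
  from ex_maximal[OF this X z] show ?thesis .
qed

lemma height_L:
  assumes po: "finite_poset P le" and G: "G \<in> filters P le"
  shows "height (filters P le) rev_incl G = card (P - G)"
proof -
  have PF: "P \<in> filters P le" by (simp add: filters_def)
  have eq: "{c \<in> filters P le. {} \<subseteq> c \<and> c \<subseteq> P} = filters P le" by (auto simp: filters_def)
  have GP: "G \<subseteq> P" using G by (simp add: filters_def)
  have fin: "finite P" using po by (simp add: finite_poset_def)
  have "height {c \<in> filters P le. {} \<subseteq> c \<and> c \<subseteq> P} rev_incl G = card (P - G)"
    by (rule height_filters[where f="dcard P le", OF fin _ PF G _ GP]) (use dcard_less[OF po] in auto)
  then show ?thesis by (simp only: eq)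
qed

lemma height_K:
  assumes po: "finite_poset P le" and a: "a \<in> filters P le" and bG: "b \<subseteq> G" and Ga: "G \<subseteq> a"
    and G: "G \<in> filters P le"
  shows "height (interval P le a b) rev_incl G = card (a - G)"
proof -
  have eq: "interval P le a b = {c \<in> filters P le. b \<subseteq> c \<and> c \<subseteq> a}"
    by (auto simp: interval_def rev_incl_def)
  have fin: "finite P" using po by (simp add: finite_poset_def)
  have "height {c \<in> filters P le. b \<subseteq> c \<and> c \<subseteq> a} rev_incl G = card (a - G)"
    by (rule height_filters[where f="dcard P le", OF fin _ a G bG Ga]) (use dcard_less[OF po] in auto)
  then show ?thesis by (simp only: eq)
qed

lemma height_PK:
  assumes fin0: "finite P" and G: "G \<in> filters (PK P) R"
    and fR: "\<And>x y. x \<in> PK P \<Longrightarrow> y \<in> PK P \<Longrightarrow> R x y \<Longrightarrow> x \<noteq> y \<Longrightarrow> f x < (f y :: nat)"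
  shows "height (filters (PK P) R) rev_incl G = card (PK P - G)"
proof -
  have PF: "PK P \<in> filters (PK P) R" by (simp add: filters_def)
  have eq: "{c \<in> filters (PK P) R. {} \<subseteq> c \<and> c \<subseteq> PK P} = filters (PK P) R"
    by (auto simp: filters_def)
  have fin: "finite (PK P)" using fin0 by (simp add: PK_def)
  have GP: "G \<subseteq> PK P" using G by (simp add: filters_def)
  have "height {c \<in> filters (PK P) R. {} \<subseteq> c \<and> c \<subseteq> PK P} rev_incl G = card (PK P - G)"
    by (rule height_filters[OF fin fR PF G _ GP]) auto
  then show ?thesis by (simp only: eq)
qed

lemma card_PK_Some: "finite P \<Longrightarrow> G \<subseteq> P \<Longrightarrow> card (PK P - Some ` G) = card (P - G) + 1"
proof -
  assume "finite P" "G \<subseteq> P"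
  have "PK P - Some ` G = insert None (Some ` (P - G))" by (auto simp: PK_def)
  moreover have "card (Some ` (P - G)) = card (P - G)" by (simp add: card_image)
  ultimately show ?thesis using \<open>finite P\<close> by simp
qed

lemma card_PK_None: "finite P \<Longrightarrow> G \<subseteq> P \<Longrightarrow> card (PK P - insert None (Some ` G)) = card (P - G)"
proof -
  assume "finite P" "G \<subseteq> P"
  have "PK P - insert None (Some ` G) = Some ` (P - G)" by (auto simp: PK_def)
  then show ?thesis by (simp add: card_image)
qed

lemma inj_Some_img: "inj_on (\<lambda>G. Some ` G) X"
  by (rule inj_on_inverseI[of _ "\<lambda>F. Some -` F"]) auto

lemma inj_None_img: "inj_on (\<lambda>G. insert None (Some ` G)) X"
  by (rule inj_on_inverseI[of _ "\<lambda>F. Some -` F"]) auto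


lemma leK_SS[simp]: "leK P le a b (Some z) (Some y) = le z y"
  by (simp add: leK_def)

lemma leK_NN[simp]: "leK P le a b None None"
  by (simp add: leK_def)

lemma S0_P: "S0 P le P = {}" by (simp add: S0_def)
lemma S1_empty: "S1 P le {} = {}" by (simp add: S1_def)

lemma leK_b_NS[simp]: "leK P le a {} None (Some y) = False"
  by (simp add: leK_def S1_empty)

lemma leK_a_SN[simp]: "leK P le P b (Some z) None = False"
  by (simp add: leK_def S0_P)

lemma leK_b_SN:
  assumes po: "finite_poset P le" and a: "a \<in> filters P le" and z: "z \<in> P"
  shows "leK P le a {} (Some z) None \<longleftrightarrow> z \<notin> a"
proof
  assume "leK P le a {} (Some z) None"
  then obtain s where s: "s \<in> S0 P le a" "le z s" by (auto simp: leK_def)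
  show "z \<notin> a"
  proof
    assume "z \<in> a"
    then have "s \<in> a" using a s by (auto simp: filters_def S0_def)
    then show False using s by (simp add: S0_def)
  qed
next
  assume za: "z \<notin> a"
  obtain s where "s \<in> P - a" "le z s" "\<forall>t\<in>P - a. le s t \<longrightarrow> t = s"
    using ex_maximal[OF po, of "P - a" z] z za by auto
  then show "leK P le a {} (Some z) None" using za by (auto simp: leK_def S0_def)
qed

lemma leK_a_NS:
  assumes po: "finite_poset P le" and b: "b \<in> filters P le" and y: "y \<in> P"
  shows "leK P le P b None (Some y) \<longleftrightarrow> y \<in> b"
proof
  assume "leK P le P b None (Some y)"
  then show "y \<in> b" using y by (auto simp: leK_def)
next
  assume yb: "y \<in> b"
  have bP: "b \<subseteq> P" using b by (simp add: filters_def)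
  obtain s where "s \<in> b" "le s y" "\<forall>t\<in>b. le t s \<longrightarrow> t = s"
    using ex_minimal[OF po bP yb] by auto
  then show "leK P le P b None (Some y)" using yb by (auto simp: leK_def S1_def)
qed

lemma PK_cases: "F \<subseteq> PK P \<Longrightarrow> F = (if None \<in> F then insert None (Some ` (Some -` F)) else Some ` (Some -` F))"
  by (auto simp: PK_def)

lemma CE_b:
  assumes po: "finite_poset P le" and a: "a \<in> filters P le"
  shows "convex_expansion P le a {} =
    (\<lambda>G. Some ` G) ` {G \<in> filters P le. G \<subseteq> a} \<union> (\<lambda>G. insert None (Some ` G)) ` filters P le"
  (is "?CE = ?X \<union> ?Y")
proof (intro equalityI subsetI)
  fix F assume F: "F \<in> ?CE"
  define G where "G = Some -` F"
  have FP: "F \<subseteq> PK P" using F by (simp add: convex_expansion_def filters_def)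
  have up: "\<And>x y. x \<in> F \<Longrightarrow> y \<in> PK P \<Longrightarrow> leK P le a {} x y \<Longrightarrow> y \<in> F"
    using F by (simp add: convex_expansion_def filters_def)
  have GP: "G \<subseteq> P" using FP by (auto simp: G_def PK_def)
  have Gf: "G \<in> filters P le"
    unfolding filters_def
  proof (intro CollectI conjI ballI impI GP)
    fix x y assume "x \<in> G" "y \<in> P" "le x y"
    then show "y \<in> G" using up[of "Some x" "Some y"] by (auto simp: G_def PK_def)
  qed
  show "F \<in> ?X \<union> ?Y"
  proof (cases "None \<in> F")
    case True
    then have "F = insert None (Some ` G)" using PK_cases[OF FP] by (simp add: G_def)
    then show ?thesis using Gf by blast
  next
    case False
    then have FG: "F = Some ` G" using PK_cases[OF FP] by (simp add: G_def)
    have "G \<subseteq> a"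
    proof
      fix z assume zG: "z \<in> G"
      show "z \<in> a"
      proof (rule ccontr)
        assume "z \<notin> a"
        then have "leK P le a {} (Some z) None" using leK_b_SN[OF po a] GP zG by auto
        then have "None \<in> F" using up[of "Some z" None] zG by (auto simp: G_def PK_def)
        then show False using False by simp
      qed
    qed
    then show ?thesis using FG Gf by blast
  qed
next
  fix F assume F: "F \<in> ?X \<union> ?Y"
  then show "F \<in> ?CE"
  proof
    assume "F \<in> ?X"
    then obtain G where G: "G \<in> filters P le" "G \<subseteq> a" "F = Some ` G" by blast
    show "F \<in> ?CE"
      unfolding convex_expansion_def filters_def
    proof (intro CollectI conjI ballI impI)
      show "F \<subseteq> PK P" using G by (auto simp: filters_def PK_def)
      fix x y assume x: "x \<in> F" and y: "y \<in> PK P" and r: "leK P le a {} x y"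
      from x G obtain z where z: "x = Some z" "z \<in> G" by blast
      show "y \<in> F"
      proof (cases y)
        case None
        have "z \<in> P" using z G by (auto simp: filters_def)
        then have "z \<notin> a" using leK_b_SN[OF po a] r None z by auto
        then show ?thesis using z G by auto
      next
        case (Some w)
        then show ?thesis using G z r y by (auto simp: filters_def PK_def)
      qed
    qed
  next
    assume "F \<in> ?Y"
    then obtain G where G: "G \<in> filters P le" "F = insert None (Some ` G)" by blast
    show "F \<in> ?CE"
      unfolding convex_expansion_def filters_def
    proof (intro CollectI conjI ballI impI)
      show "F \<subseteq> PK P" using G by (auto simp: filters_def PK_def)
      fix x y assume x: "x \<in> F" and y: "y \<in> PK P" and r: "leK P le a {} x y"
      show "y \<in> F"
      proof (cases y)
        case None
        then show ?thesis using G by simp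
      next
        case (Some w)
        then show ?thesis using G x r y by (auto simp: filters_def PK_def)
      qed
    qed
  qed
qed

lemma CE_a:
  assumes po: "finite_poset P le" and b: "b \<in> filters P le"
  shows "convex_expansion P le P b =
    (\<lambda>G. Some ` G) ` filters P le \<union> (\<lambda>G. insert None (Some ` G)) ` {G \<in> filters P le. b \<subseteq> G}"
  (is "?CE = ?X \<union> ?Y")
proof (intro equalityI subsetI)
  fix F assume F: "F \<in> ?CE"
  define G where "G = Some -` F"
  have FP: "F \<subseteq> PK P" using F by (simp add: convex_expansion_def filters_def)
  have up: "\<And>x y. x \<in> F \<Longrightarrow> y \<in> PK P \<Longrightarrow> leK P le P b x y \<Longrightarrow> y \<in> F"
    using F by (simp add: convex_expansion_def filters_def)
  have GP: "G \<subseteq> P" using FP by (auto simp: G_def PK_def)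
  have Gf: "G \<in> filters P le"
    unfolding filters_def
  proof (intro CollectI conjI ballI impI GP)
    fix x y assume "x \<in> G" "y \<in> P" "le x y"
    then show "y \<in> G" using up[of "Some x" "Some y"] by (auto simp: G_def PK_def)
  qed
  show "F \<in> ?X \<union> ?Y"
  proof (cases "None \<in> F")
    case True
    then have FG: "F = insert None (Some ` G)" using PK_cases[OF FP] by (simp add: G_def)
    have "b \<subseteq> G"
    proof
      fix y assume yb: "y \<in> b"
      have yP: "y \<in> P" using yb b by (auto simp: filters_def)
      then have "leK P le P b None (Some y)" using leK_a_NS[OF po b] yb by auto
      then have "Some y \<in> F" using up[of None "Some y"] True yP by (auto simp: PK_def)
      then show "y \<in> G" by (simp add: G_def)
    qed
    then show ?thesis using FG Gf by blast
  next
    case False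
    then have FG: "F = Some ` G" using PK_cases[OF FP] by (simp add: G_def)
    then show ?thesis using Gf by blast
  qed
next
  fix F assume F: "F \<in> ?X \<union> ?Y"
  then show "F \<in> ?CE"
  proof
    assume "F \<in> ?X"
    then obtain G where G: "G \<in> filters P le" "F = Some ` G" by blast
    show "F \<in> ?CE"
      unfolding convex_expansion_def filters_def
    proof (intro CollectI conjI ballI impI)
      show "F \<subseteq> PK P" using G by (auto simp: filters_def PK_def)
      fix x y assume x: "x \<in> F" and y: "y \<in> PK P" and r: "leK P le P b x y"
      from x G obtain z where z: "x = Some z" "z \<in> G" by blast
      show "y \<in> F"
      proof (cases y)
        case None
        then show ?thesis using r z by simp
      next
        case (Some w)
        then show ?thesis using G z r y by (auto simp: filters_def PK_def)
      qed
    qed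
  next
    assume "F \<in> ?Y"
    then obtain G where G: "G \<in> filters P le" "b \<subseteq> G" "F = insert None (Some ` G)" by blast
    show "F \<in> ?CE"
      unfolding convex_expansion_def filters_def
    proof (intro CollectI conjI ballI impI)
      show "F \<subseteq> PK P" using G by (auto simp: filters_def PK_def)
      fix x y assume x: "x \<in> F" and y: "y \<in> PK P" and r: "leK P le P b x y"
      show "y \<in> F"
      proof (cases y)
        case None
        then show ?thesis using G by simp
      next
        case (Some w)
        have wP: "w \<in> P" using y Some by (auto simp: PK_def)
        show ?thesis
        proof (cases x)
          case None
          then have "w \<in> b" using r Some leK_a_NS[OF po b wP] by simp
          then show ?thesis using G Some by auto
        next
          case (Some z)
          then show ?thesis using G x r y \<open>y = Some w\<close> by (auto simp: filters_def PK_def)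
        qed
      qed
    qed
  qed
qed


lemma finite_filters: "finite P \<Longrightarrow> finite (filters P le)"
  by (rule finite_subset[of _ "Pow P"]) (auto simp: filters_def)

lemma rank_CE:
  assumes fin: "finite P"
    and fR: "\<And>x y. x \<in> PK P \<Longrightarrow> y \<in> PK P \<Longrightarrow> leK P le a b x y \<Longrightarrow> x \<noteq> y \<Longrightarrow> f x < (f y :: nat)"
    and CE: "convex_expansion P le a b = (\<lambda>G. Some ` G) ` X \<union> (\<lambda>G. insert None (Some ` G)) ` Y"
    and X: "X \<subseteq> filters P le" and Y: "Y \<subseteq> filters P le"
  shows "rank_gen (convex_expansion P le a b) rev_incl =
     (\<Sum>G\<in>X. monom 1 (card (P - G) + 1)) + (\<Sum>G\<in>Y. monom 1 (card (P - G)))"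
proof -
  have "rank_gen (convex_expansion P le a b) rev_incl =
      (\<Sum>F\<in>convex_expansion P le a b. monom 1 (card (PK P - F)))"
    unfolding rank_gen_def
  proof (rule sum.cong[OF refl])
    fix F assume "F \<in> convex_expansion P le a b"
    then show "monom 1 (height (convex_expansion P le a b) rev_incl F) = monom 1 (card (PK P - F))"
      unfolding convex_expansion_def using height_PK[OF fin _ fR] by simp
  qed
  also have "\<dots> = (\<Sum>F\<in>(\<lambda>G. Some ` G) ` X. monom 1 (card (PK P - F)))
      + (\<Sum>F\<in>(\<lambda>G. insert None (Some ` G)) ` Y. monom 1 (card (PK P - F)))"
    unfolding CE
  proof (rule sum.union_disjoint)
    have "finite X" "finite Y" using X Y finite_filters[OF fin, of le] finite_subset by blast+
    then show "finite ((\<lambda>G. Some ` G) ` X)" "finite ((\<lambda>G. insert None (Some ` G)) ` Y)" by auto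
    show "(\<lambda>G. Some ` G) ` X \<inter> (\<lambda>G. insert None (Some ` G)) ` Y = {}" by auto
  qed
  also have "(\<Sum>F\<in>(\<lambda>G. Some ` G) ` X. monom 1 (card (PK P - F))) = (\<Sum>G\<in>X. monom 1 (card (P - G) + 1))"
    by (subst sum.reindex[OF inj_Some_img]) (use X card_PK_Some[OF fin] in \<open>auto simp: filters_def intro!: sum.cong\<close>)
  also have "(\<Sum>F\<in>(\<lambda>G. insert None (Some ` G)) ` Y. monom 1 (card (PK P - F))) = (\<Sum>G\<in>Y. monom 1 (card (P - G)))"
    by (subst sum.reindex[OF inj_None_img]) (use Y card_PK_None[OF fin] in \<open>auto simp: filters_def intro!: sum.cong\<close>)
  finally show ?thesis .
qed

theorem corollary5:
  fixes P :: "'a set" and le :: "'a \<Rightarrow> 'a \<Rightarrow> bool" and a b :: "'a set"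
  assumes "finite_poset P le"
    and "is_cutting P le a b"
  shows "(b = {} \<longrightarrow>
            rank_gen (convex_expansion P le a b) rev_incl
              = rank_gen (filters P le) rev_incl
                + monom 1 (height (filters P le) rev_incl a + 1) * rank_gen (interval P le a b) rev_incl)
       \<and> (a = P \<longrightarrow>
            rank_gen (convex_expansion P le a b) rev_incl
              = rank_gen (interval P le a b) rev_incl
                + monom 1 1 * rank_gen (filters P le) rev_incl)"
proof -
  note po = assms(1)
  have fin: "finite P" using po by (simp add: finite_poset_def)
  have af: "a \<in> filters P le" and bf: "b \<in> filters P le" and ba: "b \<subseteq> a"
    using assms(2) by (auto simp: is_cutting_def rev_incl_def)
  have aP: "a \<subseteq> P" using af by (simp add: filters_def)
  have RL: "rank_gen (filters P le) rev_incl = (\<Sum>G\<in>filters P le. monom 1 (card (P - G)))"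
    unfolding rank_gen_def by (rule sum.cong[OF refl]) (simp add: height_L[OF po])
  have Kint: "interval P le a b = {G \<in> filters P le. b \<subseteq> G \<and> G \<subseteq> a}"
    by (auto simp: interval_def rev_incl_def)
  have RK: "rank_gen (interval P le a b) rev_incl = (\<Sum>G\<in>interval P le a b. monom 1 (card (a - G)))"
    unfolding rank_gen_def
  proof (rule sum.cong[OF refl])
    fix G assume "G \<in> interval P le a b"
    then have "b \<subseteq> G" "G \<subseteq> a" "G \<in> filters P le" unfolding Kint by auto
    then show "monom 1 (height (interval P le a b) rev_incl G) = monom 1 (card (a - G))"
      using height_K[OF po af] by simp
  qed
  show ?thesis
  proof (intro conjI impI)
    assume b0: "b = {}"
    define f :: "'a option \<Rightarrow> nat" where "f = case_option (card P + 1) (dcard P le)"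
    have fR: "f x < f y" if "x \<in> PK P" "y \<in> PK P" "leK P le a b x y" "x \<noteq> y" for x y
    proof (cases x; cases y)
      fix z w assume "x = Some z" "y = Some w"
      then show ?thesis using that dcard_less[OF po, of z w] by (auto simp: f_def PK_def)
    next
      fix z assume "x = Some z" "y = None"
      then show ?thesis using dcard_le[OF fin, of le z] by (simp add: f_def)
    qed (use that b0 in auto)
    have K0: "interval P le a b = {G \<in> filters P le. G \<subseteq> a}" using Kint b0 by simp
    have "rank_gen (convex_expansion P le a b) rev_incl =
       (\<Sum>G\<in>{G \<in> filters P le. G \<subseteq> a}. monom 1 (card (P - G) + 1)) + (\<Sum>G\<in>filters P le. monom 1 (card (P - G)))"
      by (rule rank_CE[OF fin fR]) (use CE_b[OF po af] b0 in auto)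
    also have "(\<Sum>G\<in>{G \<in> filters P le. G \<subseteq> a}. monom 1 (card (P - G) + 1))
        = monom 1 (height (filters P le) rev_incl a + 1) * rank_gen (interval P le a b) rev_incl"
    proof -
      have "monom 1 (height (filters P le) rev_incl a + 1) * rank_gen (interval P le a b) rev_incl
          = (\<Sum>G\<in>{G \<in> filters P le. G \<subseteq> a}. monom 1 (card (P - a) + 1) * monom 1 (card (a - G)))"
        unfolding RK unfolding K0 height_L[OF po af] by (simp add: sum_distrib_left)
      also have "\<dots> = (\<Sum>G\<in>{G \<in> filters P le. G \<subseteq> a}. monom 1 (card (P - G) + 1))"
      proof (rule sum.cong[OF refl])
        fix G assume G: "G \<in> {G \<in> filters P le. G \<subseteq> a}"
        have "P - G = (P - a) \<union> (a - G)" using G aP by auto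
        moreover have "finite (P - a)" "finite (a - G)" using fin aP finite_subset by auto
        ultimately have "card (P - G) = card (P - a) + card (a - G)"
          by (simp add: card_Un_disjoint Int_commute Diff_Int_distrib2 inf.absorb_iff2) (metis Diff_disjoint Int_Diff card_Un_disjoint Int_commute)
        then show "monom 1 (card (P - a) + 1) * monom 1 (card (a - G)) = (monom 1 (card (P - G) + 1) :: int poly)"
          by (simp add: mult_monom)
      qed
      finally show ?thesis by simp
    qed
    finally show "rank_gen (convex_expansion P le a b) rev_incl
              = rank_gen (filters P le) rev_incl
                + monom 1 (height (filters P le) rev_incl a + 1) * rank_gen (interval P le a b) rev_incl"
      using RL by (simp add: add.commute)
  next
    assume aP0: "a = P"
    define f :: "'a option \<Rightarrow> nat" where "f = case_option 0 (\<lambda>z. dcard P le z + 1)"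
    have fR: "f x < f y" if "x \<in> PK P" "y \<in> PK P" "leK P le a b x y" "x \<noteq> y" for x y
    proof (cases x; cases y)
      fix z w assume "x = Some z" "y = Some w"
      then show ?thesis using that dcard_less[OF po, of z w] by (auto simp: f_def PK_def)
    next
      fix w assume "x = None" "y = Some w"
      then show ?thesis by (simp add: f_def)
    qed (use that aP0 in auto)
    have KP: "interval P le a b = {G \<in> filters P le. b \<subseteq> G}" using Kint aP0 by (auto simp: filters_def)
    have "rank_gen (convex_expansion P le a b) rev_incl =
       (\<Sum>G\<in>filters P le. monom 1 (card (P - G) + 1)) + (\<Sum>G\<in>{G \<in> filters P le. b \<subseteq> G}. monom 1 (card (P - G)))"
      by (rule rank_CE[OF fin fR]) (use CE_a[OF po bf] aP0 in auto)
    moreover have "monom 1 1 * rank_gen (filters P le) rev_incl = (\<Sum>G\<in>filters P le. monom 1 (card (P - G) + 1))"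
      unfolding RL by (simp add: sum_distrib_left mult_monom)
    moreover have "rank_gen (interval P le a b) rev_incl = (\<Sum>G\<in>{G \<in> filters P le. b \<subseteq> G}. monom 1 (card (P - G)))"
      using RK KP aP0 by simp
    ultimately show "rank_gen (convex_expansion P le a b) rev_incl
              = rank_gen (interval P le a b) rev_incl
                + monom 1 1 * rank_gen (filters P le) rev_incl" by (simp add: add.commute)
  qed
qed

end
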